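(* Consider the FitzHugh–Nagumo system $\dot x_1=x_1-x_1^3/3-x_2+I$, $\dot x_2=cx_1-bx_2+a$ with real parameters satisfying $0<b<1$ and $b<c$. Let $\sigma\in\{1,-1\}$, $y_1^*=\sigma\sqrt{1-b}$, $y_2^*=(a+cy_1^* )/b$, and $I=y_2^*-y_1^*+(y_1^* )^3/3$. Then $(y_1^*,y_2^* )$ is a stationary point at which the Jacobian has trace zero and positive determinant $c-b^2$, hence a nonzero purely imaginary pair of eigenvalues. In translated coordinates $u=x_1-y_1^*$, $w=x_2-y_2^*$, the quadratic form $\psi=cu^2-2buw+w^2$ is positive definite and spans the kernel of the Lie derivative of the linearization on quadratic forms, and there is $\widehat\psi=\psi+O(|(u,w)|^3)$ with $$L_q(\widehat\psi)=-\frac{b^2-2b+c}{4(b^2-c)^2}\,\psi^2+O(|(u,w)|^5),$$ where $q$ is the (translated) vector field. In particular this coefficient is negative whenever $c\ge1$.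
   Context: For a vector field $g$, $L_g(\sigma)(x)=D\sigma(x)g(x)$. *)

theory Defs
  imports "HOL-Analysis.Analysis" "HOL-Library.Landau_Symbols"
begin

definition fhn :: "real \<Rightarrow> real \<Rightarrow> real \<Rightarrow> real \<Rightarrow> real^2 \<Rightarrow> real^2" where
  "fhn a b c I x = vector [x$1 - (x$1)^3/3 - x$2 + I, c * x$1 - b * x$2 + a]"

definition lie_deriv :: "('a::real_normed_vector \<Rightarrow> 'a) \<Rightarrow> ('a \<Rightarrow> real) \<Rightarrow> 'a \<Rightarrow> real" where
  "lie_deriv g \<sigma> x = frechet_derivative \<sigma> (at x) (g x)"

definition cplx_eigenvalue :: "real^'n^'n \<Rightarrow> complex \<Rightarrow> bool" where
  "cplx_eigenvalue A l \<longleftrightarrow>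
     (\<exists>v::complex^'n. v \<noteq> 0 \<and> (\<chi> i j. complex_of_real (A$i$j)) *v v = l *s v)"

definition fhn_y1 :: "real \<Rightarrow> real \<Rightarrow> real" where
  "fhn_y1 b \<sigma> = \<sigma> * sqrt (1 - b)"
definition fhn_y2 :: "real \<Rightarrow> real \<Rightarrow> real \<Rightarrow> real \<Rightarrow> real" where
  "fhn_y2 a b c \<sigma> = (a + c * fhn_y1 b \<sigma>) / b"
definition fhn_I :: "real \<Rightarrow> real \<Rightarrow> real \<Rightarrow> real \<Rightarrow> real" where
  "fhn_I a b c \<sigma> = fhn_y2 a b c \<sigma> - fhn_y1 b \<sigma> + (fhn_y1 b \<sigma>)^3 / 3"
definition fhn_ys :: "real \<Rightarrow> real \<Rightarrow> real \<Rightarrow> real \<Rightarrow> real^2" where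
  "fhn_ys a b c \<sigma> = vector [fhn_y1 b \<sigma>, fhn_y2 a b c \<sigma>]"

end

theory Submission
  imports Defs
begin


lemma vec2_eq: "vector [p, q] = p *\<^sub>R axis 1 (1::real) + q *\<^sub>R (axis 2 1 :: real^2)"
  by (simp add: vec_eq_iff forall_2 axis_def)

lemma has_derivative_nth[derivative_intros]: "((\<lambda>z. z $ i) has_derivative (\<lambda>h. h $ i)) F"
  by (rule bounded_linear_imp_has_derivative) (rule bounded_linear_vec_nth)

lemma fhn_deriv: "(fhn a b c I has_derivative (\<lambda>h. vector [(1 - (x$1)^2) * h$1 - h$2, c * h$1 - b * h$2])) (at x)"
  unfolding fhn_def vec2_eq
  apply (rule derivative_eq_intros refl | simp)+
  apply (simp add: algebra_simps)
  done

lemma lie_deriv_eq: "(f has_derivative f') (at z) \<Longrightarrow> lie_deriv g f z = f' (g z)"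
  unfolding lie_deriv_def using frechet_derivative_at by metis

lemma mono_O:
  assumes "k \<le> i + j"
  shows "(\<lambda>z::real^2. c * (z$1)^i * (z$2)^j) \<in> O[at 0](\<lambda>z. norm z ^ k)"
proof (rule bigoI[where c="\<bar>c\<bar>"])
  have ev: "eventually (\<lambda>z::real^2. norm z \<le> 1) (at 0)"
    unfolding eventually_at by (rule exI[of _ 1]) (auto simp: dist_norm)
  show "eventually (\<lambda>z::real^2. norm (c * (z$1)^i * (z$2)^j) \<le> \<bar>c\<bar> * norm (norm z ^ k)) (at 0)"
    using ev
  proof eventually_elim
    case (elim z)
    have "\<bar>z$1\<bar>^i \<le> norm z ^ i" by (rule power_mono) (auto simp: component_le_norm_cart)
    moreover have "\<bar>z$2\<bar>^j \<le> norm z ^ j" by (rule power_mono) (auto simp: component_le_norm_cart)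
    ultimately have "\<bar>z$1\<bar>^i * \<bar>z$2\<bar>^j \<le> norm z ^ i * norm z ^ j"
      by (intro mult_mono) auto
    also have "\<dots> = norm z ^ (i+j)" by (simp add: power_add)
    also have "\<dots> \<le> norm z ^ k" using elim assms by (intro power_decreasing) auto
    finally have "\<bar>z$1\<bar>^i * \<bar>z$2\<bar>^j \<le> norm z ^ k" .
    then show ?case
      by (simp add: abs_mult power_abs mult_left_mono mult.assoc)
  qed
qed

lemma poly_O:
  assumes "\<forall>(c,i,j)\<in>set ms. k \<le> i + j"
  shows "(\<lambda>z::real^2. \<Sum>(c,i,j)\<leftarrow>ms. c * (z$1)^i * (z$2)^j) \<in> O[at 0](\<lambda>z. norm z ^ k)"
  using assms
proof (induction ms)
  case Nil then show ?case by simp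
next
  case (Cons m ms)
  obtain c i j where m: "m = (c,i,j)" by (cases m) auto
  show ?case using Cons mono_O[of k i j c] by (auto simp: m intro!: sum_in_bigo)
qed



lemma coeffs:
  fixes b c y :: real
  assumes e: "c - b^2 \<noteq> 0" and yy: "y^2 = 1 - b"
  assumes e_def: "e = c - b^2"
  assumes A_def: "A = -4*b*c*y/(3*e)" and B_def: "B = 2*(b^2+c)*y/e" and Cc_def: "Cc = -4*b*y/e" and D_def: "D = 4*y/(3*e)"
    and K_def: "K = (b^2 - 2*b + c) / (4 * (b^2 - c)^2)"
  assumes E1_def: "E1 = K*(4*b^2+5*c)/3 + 4*b*(1-b)/(3*e)" and E2_def: "E2 = -3*K*b" and E3_def: "E3 = K"
  assumes E0_def: "E0 = (2*b*E1 - 10*K*b*c + 2*b/3 - 4*(b^2+c)*(1-b)/e)/4"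
  shows "3*A*b + B*c - 2*c*y = 0" "-3*A + B*b + 2*Cc*c + 2*b*y = 0"
    "-2*B - Cc*b + 3*D*c = 0" "-Cc - 3*D*b = 0"
    "4*b*E0 + c*E1 - 2*c/3 - 3*A*y + K*c^2 = 0"
    "2*b*E1 - 4*E0 + 2*c*E2 + 2*b/3 - 2*B*y - 4*K*b*c = 0"
    "-3*E1 + 3*c*E3 - Cc*y + K*(4*b^2+2*c) = 0"
    "-2*b*E3 - 2*E2 - 4*K*b = 0"
    "- E3 + K = 0"
proof -
  have e': "e \<noteq> 0" using e by (simp add: e_def)
  have y2: "y*y = 1 - b" using yy by (simp add: power2_eq_square)
  have bc: "(b^2 - c)^2 = e^2" by (simp add: e_def power2_eq_square algebra_simps)
  have ce: "c = e + b^2" by (simp add: e_def)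
  have bs: "b = 1 - y^2" using yy by simp
  show "3*A*b + B*c - 2*c*y = 0" using e' unfolding A_def B_def by (simp add: field_simps) (simp add: ce algebra_simps power2_eq_square)
  show "-3*A + B*b + 2*Cc*c + 2*b*y = 0" using e' unfolding A_def B_def Cc_def by (simp add: field_simps) (simp add: ce algebra_simps power2_eq_square)
  show "-2*B - Cc*b + 3*D*c = 0" using e' unfolding D_def B_def Cc_def by (simp add: field_simps) (simp add: ce algebra_simps power2_eq_square)
  show "-Cc - 3*D*b = 0" using e' unfolding D_def Cc_def by (simp add: field_simps)
  show "-2*b*E3 - 2*E2 - 4*K*b = 0" unfolding E2_def E3_def by simp
  show "- E3 + K = 0" unfolding E3_def by simp
  have Ay: "A*y = -4*b*c*(1-b)/(3*e)" unfolding A_def by (simp add: y2[symmetric] field_simps)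
  have By: "B*y = 2*(b^2+c)*(1-b)/e" unfolding B_def by (simp add: y2[symmetric] field_simps)
  have Cy: "Cc*y = -4*b*(1-b)/e" unfolding Cc_def by (simp add: y2[symmetric] field_simps)
  have K: "K = (b^2 - 2*b + c)/(4*e^2)" unfolding K_def bc by simp
  show "2*b*E1 - 4*E0 + 2*c*E2 + 2*b/3 - 2*B*y - 4*K*b*c = 0"
    unfolding B_def E0_def E2_def using e' by (simp add: field_simps) (simp add: ce bs algebra_simps power2_eq_square)
  show "-3*E1 + 3*c*E3 - Cc*y + K*(4*b^2+2*c) = 0"
    unfolding Cy E1_def E3_def using e' by (simp add: field_simps)
  show "4*b*E0 + c*E1 - 2*c/3 - 3*A*y + K*c^2 = 0"
    unfolding A_def E0_def E1_def E2_def K using e' by (simp add: field_simps) (insert ce bs, algebra)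
qed

lemma main_ident:
  fixes u w b c y A B Cc D E0 E1 E2 E3 K :: real
  assumes "3*A*b + B*c - 2*c*y = 0" "-3*A + B*b + 2*Cc*c + 2*b*y = 0"
    "-2*B - Cc*b + 3*D*c = 0" "-Cc - 3*D*b = 0"
    "4*b*E0 + c*E1 - 2*c/3 - 3*A*y + K*c^2 = 0"
    "2*b*E1 - 4*E0 + 2*c*E2 + 2*b/3 - 2*B*y - 4*K*b*c = 0"
    "-3*E1 + 3*c*E3 - Cc*y + K*(4*b^2+2*c) = 0"
    "-2*b*E3 - 2*E2 - 4*K*b = 0"
    "- E3 + K = 0"
  shows "(2*c*u - 2*b*w + 3*A*u^2 + 2*B*u*w + Cc*w^2 + 4*E0*u^3 + 3*E1*u^2*w + 2*E2*u*w^2 + E3*w^3)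
           * (b*u - w - y*u^2 - u^3/3)
         + (-2*b*u + 2*w + B*u^2 + 2*Cc*u*w + 3*D*w^2 + E1*u^3 + 2*E2*u^2*w + 3*E3*u*w^2) * (c*u - b*w)
         + K * (c*u^2 - 2*b*u*w + w^2)^2
       = (3*A*u^2 + 2*B*u*w + Cc*w^2) * (- (u^3/3))
         + (4*E0*u^3 + 3*E1*u^2*w + 2*E2*u*w^2 + E3*w^3) * (- y*u^2 - u^3/3)"
proof -
  have "(2*c*u - 2*b*w + 3*A*u^2 + 2*B*u*w + Cc*w^2 + 4*E0*u^3 + 3*E1*u^2*w + 2*E2*u*w^2 + E3*w^3)
           * (b*u - w - y*u^2 - u^3/3)
         + (-2*b*u + 2*w + B*u^2 + 2*Cc*u*w + 3*D*w^2 + E1*u^3 + 2*E2*u^2*w + 3*E3*u*w^2) * (c*u - b*w)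
         + K * (c*u^2 - 2*b*u*w + w^2)^2
       - ((3*A*u^2 + 2*B*u*w + Cc*w^2) * (- (u^3/3))
         + (4*E0*u^3 + 3*E1*u^2*w + 2*E2*u*w^2 + E3*w^3) * (- y*u^2 - u^3/3))
      = u^3*(3*A*b + B*c - 2*c*y) + u^2*w*(-3*A + B*b + 2*Cc*c + 2*b*y)
       + u*w^2*(-2*B - Cc*b + 3*D*c) + w^3*(-Cc - 3*D*b)
       + u^4*(4*b*E0 + c*E1 - 2*c/3 - 3*A*y + K*c^2)
       + u^3*w*(2*b*E1 - 4*E0 + 2*c*E2 + 2*b/3 - 2*B*y - 4*K*b*c)
       + u^2*w^2*(-3*E1 + 3*c*E3 - Cc*y + K*(4*b^2+2*c))
       + u*w^3*(-2*b*E3 - 2*E2 - 4*K*b)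
       + w^4*(- E3 + K)"
    by (simp add: algebra_simps power2_eq_square power3_eq_cube power4_eq_xxxx)
  then show ?thesis using assms by simp
qed



definition coef :: "real list \<Rightarrow> nat \<Rightarrow> nat \<Rightarrow> real" where
 "coef xs i j = (if (i,j) = (2,0) then xs!0 else if (i,j) = (1,1) then xs!1 else if (i,j) = (0,2) then xs!2
   else if (i,j) = (3,0) then xs!3 else if (i,j) = (2,1) then xs!4 else if (i,j) = (1,2) then xs!5
   else if (i,j) = (0,3) then xs!6 else if (i,j) = (4,0) then xs!7 else if (i,j) = (3,1) then xs!8
   else if (i,j) = (2,2) then xs!9 else if (i,j) = (1,3) then xs!10 else 0)"

lemma coef_sum:
  "(\<Sum>i\<le>4. \<Sum>j\<le>4. coef [c2,c11,c02,A,B,Cc,D,E0,E1,E2,E3] i j * u^i * w^j) =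
     c2*u^2 + c11*u*w + c02*w^2 + A*u^3 + B*u^2*w + Cc*u*w^2 + D*w^3 + E0*u^4 + E1*u^3*w + E2*u^2*w^2 + E3*u*w^3"
  by (simp add: eval_nat_numeral coef_def algebra_simps)

lemma psi_deriv: "((\<lambda>z::real^2. c2*(z$1)^2 + c11*(z$1)*(z$2) + c02*(z$2)^2 + A*(z$1)^3 + B*(z$1)^2*(z$2) + Cc*(z$1)*(z$2)^2 + D*(z$2)^3 + E0*(z$1)^4 + E1*(z$1)^3*(z$2) + E2*(z$1)^2*(z$2)^2 + E3*(z$1)*(z$2)^3)
  has_derivative (\<lambda>h. (2*c2*(z$1) + c11*(z$2) + 3*A*(z$1)^2 + 2*B*(z$1)*(z$2) + Cc*(z$2)^2 + 4*E0*(z$1)^3 + 3*E1*(z$1)^2*(z$2) + 2*E2*(z$1)*(z$2)^2 + E3*(z$2)^3) * h$1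
     + (c11*(z$1) + 2*c02*(z$2) + B*(z$1)^2 + 2*Cc*(z$1)*(z$2) + 3*D*(z$2)^2 + E1*(z$1)^3 + 2*E2*(z$1)^2*(z$2) + 3*E3*(z$1)*(z$2)^2) * h$2)) (at z)"
  apply (rule derivative_eq_intros refl | simp)+
  apply (simp add: algebra_simps eval_nat_numeral)
  done



lemma G_list:
  fixes u w :: real
  shows "(3*A*u^2 + 2*B*u*w + Cc*w^2) * (- (u^3/3))
         + (4*E0*u^3 + 3*E1*u^2*w + 2*E2*u*w^2 + E3*w^3) * (- y*u^2 - u^3/3)
   = (\<Sum>(c,i,j)\<leftarrow>[(-A,5,0),(-2*B/3,4,1),(-Cc/3,3,2),
        (-4*E0*y,5,0),(-3*E1*y,4,1),(-2*E2*y,3,2),(-E3*y,2,3),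
        (-4*E0/3,6,0),(-E1,5,1),(-2*E2/3,4,2),(-E3/3,3,3)]. c * u^i * w^j)"
  by simp algebra

theorem mainTheorem10:
  fixes a b c \<sigma> :: real
  assumes "0 < b" "b < 1" "b < c" "\<sigma> \<in> {1, -1}"
  defines "ys \<equiv> fhn_ys a b c \<sigma>"
    and "f \<equiv> fhn a b c (fhn_I a b c \<sigma>)"
    and "J \<equiv> jacobian (fhn a b c (fhn_I a b c \<sigma>)) (at (fhn_ys a b c \<sigma>))"
    and "q \<equiv> (\<lambda>z. fhn a b c (fhn_I a b c \<sigma>) (z + fhn_ys a b c \<sigma>))"
    and "\<psi> \<equiv> (\<lambda>z::real^2. c * (z$1)^2 - 2 * b * (z$1) * (z$2) + (z$2)^2)"
    and "K \<equiv> (b^2 - 2*b + c) / (4 * (b^2 - c)^2)"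
  shows "f ys = 0 \<and> f differentiable (at ys) \<and>
    trace J = 0 \<and> det J = c - b^2 \<and> det J > 0 \<and>
    (\<exists>\<omega>>0. \<forall>l. cplx_eigenvalue J l \<longleftrightarrow> l = \<i> * of_real \<omega> \<or> l = - \<i> * of_real \<omega>) \<and>
    (\<forall>z. z \<noteq> 0 \<longrightarrow> \<psi> z > 0) \<and>
    (\<forall>\<alpha> \<beta> \<gamma>.
       (\<forall>z. lie_deriv (\<lambda>z. J *v z) (\<lambda>z. \<alpha> * (z$1)^2 + \<beta> * (z$1) * (z$2) + \<gamma> * (z$2)^2) z = 0)
       \<longleftrightarrow> (\<exists>t. \<alpha> = t * c \<and> \<beta> = - 2 * b * t \<and> \<gamma> = t)) \<and>
    (\<exists>(N::nat) (C::nat \<Rightarrow> nat \<Rightarrow> real).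
       let \<psi>h = (\<lambda>z::real^2. \<Sum>i\<le>N. \<Sum>j\<le>N. C i j * (z$1)^i * (z$2)^j) in
       (\<lambda>z. \<psi>h z - \<psi> z) \<in> O[at 0](\<lambda>z. norm z ^ 3) \<and>
       (\<lambda>z. lie_deriv q \<psi>h z + K * (\<psi> z)^2) \<in> O[at 0](\<lambda>z. norm z ^ 5)) \<and>
    (c \<ge> 1 \<longrightarrow> - K < 0)"
proof -
  define y where "y = fhn_y1 b \<sigma>"
  define y2 where "y2 = fhn_y2 a b c \<sigma>"
  have s2: "\<sigma>^2 = 1" using assms(4) by auto
  have yy: "y^2 = 1 - b" using s2 assms(2) by (simp add: y_def fhn_y1_def power_mult_distrib)
  have b0: "b \<noteq> 0" using assms(1) by simp
  have by2: "b * y2 = a + c * y" using b0 by (simp add: y2_def fhn_y2_def y_def)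
  have ysv: "ys = vector [y, y2]" by (simp add: ys_def fhn_ys_def y_def y2_def)
  have Iv: "fhn_I a b c \<sigma> = y2 - y + y^3/3" by (simp add: fhn_I_def y_def y2_def)
  have e: "c - b^2 > 0"
  proof -
    have "b^2 < b" using assms(1,2) by (simp add: power2_eq_square)
    then show ?thesis using assms(3) by simp
  qed
  have f0: "f ys = 0"
    unfolding f_def ysv fhn_def Iv using by2
    by (simp add: vec_eq_iff forall_2 algebra_simps)
  have fd: "(f has_derivative (\<lambda>h. vector [b * h$1 - h$2, c * h$1 - b * h$2])) (at ys)"
    using fhn_deriv[of a b c "fhn_I a b c \<sigma>" ys] yy unfolding f_def ysv by simp
  have fdiff: "f differentiable (at ys)" using fd by (rule differentiableI)
  have Jv: "J = vector [vector [b, -1], vector [c, -b]]"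
    unfolding J_def jacobian_def f_def[symmetric] ys_def[symmetric] frechet_derivative_at[OF fd, symmetric]
    by (simp add: matrix_def vec_eq_iff forall_2 axis_def)
  have Jmul: "J *v z = vector [b * z$1 - z$2, c * z$1 - b * z$2]" for z :: "real^2"
    by (simp add: Jv matrix_vector_mult_def vec_eq_iff forall_2 sum_2)
  have trJ: "trace J = 0" by (simp add: Jv trace_def sum_2)
  have detJ: "det J = c - b^2" by (simp add: Jv det_2 power2_eq_square)
  define \<omega> where "\<omega> = sqrt (c - b^2)"
  have \<omega>0: "\<omega> > 0" using e by (simp add: \<omega>_def)
  have \<omega>2: "\<omega>^2 = c - b^2" using e by (simp add: \<omega>_def)
  have eig: "cplx_eigenvalue J l \<longleftrightarrow> l = \<i> * of_real \<omega> \<or> l = - \<i> * of_real \<omega>" for l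
  proof -
    have key: "l^2 + of_real (\<omega>^2) = 0 \<longleftrightarrow> l = \<i> * of_real \<omega> \<or> l = - \<i> * of_real \<omega>"
    proof -
      have "l^2 + of_real (\<omega>^2) = (l - \<i> * of_real \<omega>) * (l + \<i> * of_real \<omega>)"
        by (simp add: algebra_simps power2_eq_square)
      then show ?thesis by (simp add: eq_neg_iff_add_eq_0)
    qed
    have M: "(\<chi> i j. complex_of_real (J$i$j)) *v v = l *s v \<longleftrightarrow>
        of_real b * v$1 - v$2 = l * v$1 \<and> of_real c * v$1 - of_real b * v$2 = l * v$2" for v :: "complex^2"
      by (simp add: Jv matrix_vector_mult_def vec_eq_iff forall_2 sum_2)
    show ?thesis
    proof
      assume "cplx_eigenvalue J l"
      then obtain v :: "complex^2" where v0: "v \<noteq> 0" and ev: "of_real b * v$1 - v$2 = l * v$1"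
        "of_real c * v$1 - of_real b * v$2 = l * v$2"
        unfolding cplx_eigenvalue_def M by blast
      have v2: "v$2 = (of_real b - l) * v$1" using ev(1) by (simp add: algebra_simps)
      have v1: "v$1 \<noteq> 0"
      proof
        assume "v$1 = 0"
        then have "v$2 = 0" using v2 by simp
        with \<open>v$1 = 0\<close> have "v = 0" by (simp add: vec_eq_iff forall_2)
        with v0 show False by simp
      qed
      have "v$1 * (l^2 + of_real (\<omega>^2)) = 0"
        using ev(2) unfolding v2 \<omega>2 by (simp add: algebra_simps power2_eq_square)
      then have "l^2 + of_real (\<omega>^2) = 0" using v1 by simp
      then show "l = \<i> * of_real \<omega> \<or> l = - \<i> * of_real \<omega>" using key by blast
    next
      assume "l = \<i> * of_real \<omega> \<or> l = - \<i> * of_real \<omega>"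
      then have l2: "l^2 + of_real (\<omega>^2) = 0" using key by blast
      let ?v = "vector [1, of_real b - l] :: complex^2"
      have "?v \<noteq> 0" by (metis vector_2(1) zero_index zero_neq_one)
      moreover have "of_real c * ?v$1 - of_real b * ?v$2 = l * ?v$2"
      proof -
        have "of_real c - of_real b * (of_real b - l) - l * (of_real b - l) = (l^2 + of_real (\<omega>^2) :: complex)"
          unfolding \<omega>2 by (simp add: algebra_simps power2_eq_square)
        then show ?thesis using l2 by simp
      qed
      ultimately show "cplx_eigenvalue J l"
        unfolding cplx_eigenvalue_def M by (intro exI[of _ ?v]) simp
    qed
  qed
  have pd: "\<psi> z > 0" if "z \<noteq> 0" for z
  proof -
    have eq: "\<psi> z = (z$2 - b * z$1)^2 + (c - b^2) * (z$1)^2"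
      by (simp add: \<psi>_def algebra_simps power2_eq_square)
    show ?thesis
    proof (cases "z$1 = 0")
      case True
      then have "z$2 \<noteq> 0" using that by (auto simp: vec_eq_iff forall_2)
      then show ?thesis using True by (simp add: eq)
    next
      case False
      then have "(c - b^2) * (z$1)^2 > 0" using e by simp
      then show ?thesis unfolding eq by (smt (verit) zero_le_power2)
    qed
  qed
  have ker: "(\<forall>z. lie_deriv (\<lambda>z. J *v z) (\<lambda>z. \<alpha> * (z$1)^2 + \<beta> * (z$1) * (z$2) + \<gamma> * (z$2)^2) z = 0)
       \<longleftrightarrow> (\<exists>t. \<alpha> = t * c \<and> \<beta> = - 2 * b * t \<and> \<gamma> = t)" for \<alpha> \<beta> \<gamma>
  proof -
    have ld: "lie_deriv (\<lambda>z. J *v z) (\<lambda>z. \<alpha> * (z$1)^2 + \<beta> * (z$1) * (z$2) + \<gamma> * (z$2)^2) z =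
       (z$1)^2 * (2*\<alpha>*b + \<beta>*c) + z$1 * z$2 * (2*\<gamma>*c - 2*\<alpha>) + (z$2)^2 * (-\<beta> - 2*\<gamma>*b)" for z :: "real^2"
    proof -
      have "((\<lambda>z::real^2. \<alpha> * (z$1)^2 + \<beta> * (z$1) * (z$2) + \<gamma> * (z$2)^2) has_derivative
          (\<lambda>h. 2*\<alpha>*z$1*h$1 + \<beta>*(h$1*z$2 + z$1*h$2) + 2*\<gamma>*z$2*h$2)) (at z)"
        by (rule derivative_eq_intros refl | simp)+ (simp add: algebra_simps)
      then show ?thesis by (simp add: lie_deriv_eq Jmul algebra_simps power2_eq_square)
    qed
    show ?thesis
    proof
      assume H: "\<forall>z. lie_deriv (\<lambda>z. J *v z) (\<lambda>z. \<alpha> * (z$1)^2 + \<beta> * (z$1) * (z$2) + \<gamma> * (z$2)^2) z = 0"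
      have h1: "2*\<alpha>*b + \<beta>*c = 0" using H[rule_format, of "vector [1,0]"] by (simp add: ld)
      have h2: "-\<beta> - 2*\<gamma>*b = 0" using H[rule_format, of "vector [0,1]"] by (simp add: ld)
      have h3: "2*\<gamma>*c - 2*\<alpha> = 0" using H[rule_format, of "vector [1,1]"] h1 h2 by (simp add: ld)
      show "\<exists>t. \<alpha> = t * c \<and> \<beta> = - 2 * b * t \<and> \<gamma> = t"
        using h2 h3 by (intro exI[of _ \<gamma>]) (simp add: algebra_simps)
    next
      assume "\<exists>t. \<alpha> = t * c \<and> \<beta> = - 2 * b * t \<and> \<gamma> = t"
      then obtain t where "\<alpha> = t * c" "\<beta> = - 2 * b * t" "\<gamma> = t" by blast
      then show "\<forall>z. lie_deriv (\<lambda>z. J *v z) (\<lambda>z. \<alpha> * (z$1)^2 + \<beta> * (z$1) * (z$2) + \<gamma> * (z$2)^2) z = 0"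
        unfolding ld by (simp add: algebra_simps)
    qed
  qed
  have Kpos: "c \<ge> 1 \<longrightarrow> - K < 0"
  proof
    assume c1: "c \<ge> 1"
    have "b^2 - 2*b + c > 0"
    proof -
      have "(1-b)^2 > 0" using assms(2) by simp
      then show ?thesis using c1 by (simp add: power2_eq_square algebra_simps)
    qed
    moreover have "4 * (b^2 - c)^2 > 0" using e by simp
    ultimately show "- K < 0" unfolding K_def by simp
  qed
  define ee where "ee = c - b^2"
  define A where "A = -4*b*c*y/(3*ee)"
  define B where "B = 2*(b^2+c)*y/ee"
  define Cc where "Cc = -4*b*y/ee"
  define D where "D = 4*y/(3*ee)"
  define E1 where "E1 = K*(4*b^2+5*c)/3 + 4*b*(1-b)/(3*ee)"
  define E2 where "E2 = -3*K*b"
  define E3 where "E3 = K"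
  define E0 where "E0 = (2*b*E1 - 10*K*b*c + 2*b/3 - 4*(b^2+c)*(1-b)/ee)/4"
  have ne: "c - b^2 \<noteq> 0" using e by simp
  note cf = coeffs[OF ne yy ee_def A_def B_def Cc_def D_def K_def[THEN meta_eq_to_obj_eq] E1_def E2_def E3_def E0_def]
  have bs: "b = 1 - y^2" using yy by simp
  have qv: "q z = vector [b*z$1 - z$2 - y*(z$1)^2 - (z$1)^3/3, c*z$1 - b*z$2]" for z :: "real^2"
  proof -
    have 1: "(z$1 + y) - (z$1 + y)^3/3 - (z$2 + y2) + (y2 - y + y^3/3) = b*z$1 - z$2 - y*(z$1)^2 - (z$1)^3/3"
      unfolding bs by (simp add: algebra_simps power2_eq_square power3_eq_cube)
    have 2: "c * (z$1 + y) - b * (z$2 + y2) + a = c*z$1 - b*z$2"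
      using by2 by (simp add: algebra_simps)
    show ?thesis unfolding q_def fhn_def Iv ysv[unfolded ys_def] using 1 2
      by (simp add: vec_eq_iff forall_2)
  qed
  define P where "P = (\<lambda>z::real^2. c*(z$1)^2 + (-2*b)*(z$1)*(z$2) + 1*(z$2)^2 + A*(z$1)^3 + B*(z$1)^2*(z$2) + Cc*(z$1)*(z$2)^2 + D*(z$2)^3 + E0*(z$1)^4 + E1*(z$1)^3*(z$2) + E2*(z$1)^2*(z$2)^2 + E3*(z$1)*(z$2)^3)"
  have psh: "(\<lambda>z::real^2. \<Sum>i\<le>4. \<Sum>j\<le>4. coef [c, -2*b, 1, A, B, Cc, D, E0, E1, E2, E3] i j * (z$1)^i * (z$2)^j) = P"
    unfolding P_def by (simp only: coef_sum)
  have O1: "(\<lambda>z. P z - \<psi> z) \<in> O[at 0](\<lambda>z. norm z ^ 3)"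
  proof -
    have "(\<lambda>z. P z - \<psi> z) = (\<lambda>z::real^2. \<Sum>(c,i,j)\<leftarrow>[(A,3,0),(B,2,1),(Cc,1,2),(D,0,3),(E0,4,0),(E1,3,1),(E2,2,2),(E3,1,3)]. c * (z$1)^i * (z$2)^j)"
      by (simp add: P_def \<psi>_def fun_eq_iff algebra_simps)
    also have "\<dots> \<in> O[at 0](\<lambda>z. norm z ^ 3)" by (rule poly_O) simp
    finally show ?thesis .
  qed
  have O2: "(\<lambda>z. lie_deriv q P z + K * (\<psi> z)^2) \<in> O[at 0](\<lambda>z. norm z ^ 5)"
  proof -
    have "(\<lambda>z. lie_deriv q P z + K * (\<psi> z)^2) = (\<lambda>z::real^2. \<Sum>(c,i,j)\<leftarrow>[(-A,5,0),(-2*B/3,4,1),(-Cc/3,3,2),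
        (-4*E0*y,5,0),(-3*E1*y,4,1),(-2*E2*y,3,2),(-E3*y,2,3),
        (-4*E0/3,6,0),(-E1,5,1),(-2*E2/3,4,2),(-E3/3,3,3)]. c * (z$1)^i * (z$2)^j)"
    proof
      fix z :: "real^2"
      have "lie_deriv q P z + K * (\<psi> z)^2 =
         (3*A*(z$1)^2 + 2*B*(z$1)*(z$2) + Cc*(z$2)^2) * (- ((z$1)^3/3))
         + (4*E0*(z$1)^3 + 3*E1*(z$1)^2*(z$2) + 2*E2*(z$1)*(z$2)^2 + E3*(z$2)^3) * (- y*(z$1)^2 - (z$1)^3/3)"
        unfolding P_def
        apply (subst lie_deriv_eq[OF psi_deriv])
        apply (simp add: qv \<psi>_def)
        using main_ident[OF cf, of "z$1" "z$2"] by (simp add: algebra_simps)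
      also have "\<dots> = (\<Sum>(c,i,j)\<leftarrow>[(-A,5,0),(-2*B/3,4,1),(-Cc/3,3,2),
        (-4*E0*y,5,0),(-3*E1*y,4,1),(-2*E2*y,3,2),(-E3*y,2,3),
        (-4*E0/3,6,0),(-E1,5,1),(-2*E2/3,4,2),(-E3/3,3,3)]. c * (z$1)^i * (z$2)^j)"
        by (rule G_list)
      finally show "lie_deriv q P z + K * (\<psi> z)^2 = (\<Sum>(c,i,j)\<leftarrow>[(-A,5,0),(-2*B/3,4,1),(-Cc/3,3,2),
        (-4*E0*y,5,0),(-3*E1*y,4,1),(-2*E2*y,3,2),(-E3*y,2,3),
        (-4*E0/3,6,0),(-E1,5,1),(-2*E2/3,4,2),(-E3/3,3,3)]. c * (z$1)^i * (z$2)^j)" .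
    qed
    also have "\<dots> \<in> O[at 0](\<lambda>z. norm z ^ 5)" by (rule poly_O) simp
    finally show ?thesis .
  qed
  have ex: "\<exists>(N::nat) (C::nat \<Rightarrow> nat \<Rightarrow> real).
       let \<psi>h = (\<lambda>z::real^2. \<Sum>i\<le>N. \<Sum>j\<le>N. C i j * (z$1)^i * (z$2)^j) in
       (\<lambda>z. \<psi>h z - \<psi> z) \<in> O[at 0](\<lambda>z. norm z ^ 3) \<and>
       (\<lambda>z. lie_deriv q \<psi>h z + K * (\<psi> z)^2) \<in> O[at 0](\<lambda>z. norm z ^ 5)"
    apply (rule exI[of _ 4], rule exI[of _ "coef [c, -2*b, 1, A, B, Cc, D, E0, E1, E2, E3]"])
    unfolding Let_def psh using O1 O2 by simp
  have dpos: "det J > 0" using detJ e by simp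
  have eigs: "\<exists>\<omega>>0. \<forall>l. cplx_eigenvalue J l \<longleftrightarrow> l = \<i> * of_real \<omega> \<or> l = - \<i> * of_real \<omega>"
    using \<omega>0 eig by blast
  have pds: "\<forall>z. z \<noteq> 0 \<longrightarrow> \<psi> z > 0" using pd by blast
  have kers: "\<forall>\<alpha> \<beta> \<gamma>.
       (\<forall>z. lie_deriv (\<lambda>z. J *v z) (\<lambda>z. \<alpha> * (z$1)^2 + \<beta> * (z$1) * (z$2) + \<gamma> * (z$2)^2) z = 0)
       \<longleftrightarrow> (\<exists>t. \<alpha> = t * c \<and> \<beta> = - 2 * b * t \<and> \<gamma> = t)" using ker by blast
  show ?thesis
    using f0 fdiff trJ detJ dpos eigs pds kers ex Kpos by (intro conjI) assumption+
qed


end
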